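(* Let $0=t_0<t_1<\dots<t_N=T$ be a time grid with $\tau_k=t_k-t_{k-1}$ and $r_k=\tau_k/\tau_{k-1}$ ($k\ge2$). Let $0<\iota<1$ and let $v\in C^2(0,T]$ (and $v\in C[0,T]$) satisfy $|v_{tt}(t)|\le C(1+t^{\iota-2})$ for $t\in(0,T]$. Define, for $2\le n\le N$, $\mathcal R^n[v]:=v(t_n)-(1+r_n)v(t_{n-1})+r_nv(t_{n-2})$. Then there is a constant $C_v$ depending only on $v$ such that $$|\mathcal R^2[v]|\le C_v\big((\tau_1+\tau_2)^\iota/\iota+t_1^{\iota-2}\tau_2^2\big),\qquad |\mathcal R^n[v]|\le C_v\big(t_{n-2}^{\iota-2}(\tau_{n-1}+\tau_n)^2+t_{n-1}^{\iota-2}\tau_n^2\big),\ 3\le n\le N.$$ Moreover, if the grid is graded, $t_k=T(k/N)^\gamma$ with $\gamma\ge1$, then $|\mathcal R^n[v]|\le C_{v,\gamma}N^{-\min\{2,\gamma\iota\}}$ for $2\le n\le N$, where $C_{v,\gamma}$ depends only on $v$ and $\gamma$. *)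

theory Defs
  imports Complex_Main
begin

definition is_grid :: "real \<Rightarrow> nat \<Rightarrow> (nat \<Rightarrow> real) \<Rightarrow> bool" where
  "is_grid T N t \<longleftrightarrow> t 0 = 0 \<and> t N = T \<and> (\<forall>k<N. t k < t (Suc k))"

definition tau :: "(nat \<Rightarrow> real) \<Rightarrow> nat \<Rightarrow> real" where
  "tau t k = t k - t (k - 1)"

definition ratio :: "(nat \<Rightarrow> real) \<Rightarrow> nat \<Rightarrow> real" where
  "ratio t k = tau t k / tau t (k - 1)"

definition Rres :: "(real \<Rightarrow> real) \<Rightarrow> (nat \<Rightarrow> real) \<Rightarrow> nat \<Rightarrow> real" where
  "Rres v t n = v (t n) - (1 + ratio t n) * v (t (n - 1)) + ratio t n * v (t (n - 2))"

definition graded :: "real \<Rightarrow> real \<Rightarrow> nat \<Rightarrow> nat \<Rightarrow> real" where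
  "graded T \<gamma> N k = T * (real k / real N) powr \<gamma>"

end

theory Submission
  imports Defs
begin


lemma core3:
  fixes g g' g'' :: "real \<Rightarrow> real"
  assumes ab: "a < b" and bc: "b < c" and cg: "continuous_on {a..c} g"
    and dg: "\<And>x. a < x \<Longrightarrow> x < c \<Longrightarrow> (g has_real_derivative g' x) (at x)"
    and dg': "\<And>x. a < x \<Longrightarrow> x < c \<Longrightarrow> (g' has_real_derivative g'' x) (at x)"
    and pos: "\<And>x. a < x \<Longrightarrow> x < c \<Longrightarrow> g'' x \<ge> 0"
  shows "(c - b) * (g b - g a) \<le> (b - a) * (g c - g b)"
proof -
  have c1: "continuous_on {a..b} g" using bc by (intro continuous_on_subset[OF cg]) auto
  have c2: "continuous_on {b..c} g" using ab by (intro continuous_on_subset[OF cg]) auto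
  obtain l1 z1 where z1: "a < z1" "z1 < b" "(g has_real_derivative l1) (at z1)" "g b - g a = (b - a) * l1"
    using MVT[OF ab c1] dg bc by (meson less_trans real_differentiable_def)
  obtain l2 z2 where z2: "b < z2" "z2 < c" "(g has_real_derivative l2) (at z2)" "g c - g b = (c - b) * l2"
    using MVT[OF bc c2] dg ab by (meson less_trans real_differentiable_def)
  have l1: "l1 = g' z1" using DERIV_unique z1(3) dg[of z1] z1 bc by auto
  have l2: "l2 = g' z2" using DERIV_unique z2(3) dg[of z2] z2 ab by auto
  have z12: "z1 < z2" using z1 z2 by auto
  obtain w where w: "z1 < w" "w < z2" "g' z2 - g' z1 = (z2 - z1) * g'' w"
    using MVT2[OF z12, of g' g''] dg' z1 z2 by (smt (verit))
  have "g'' w \<ge> 0" using pos w z1 z2 by auto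
  hence "l1 \<le> l2" using w z12 l1 l2 by (smt (verit) mult_nonneg_nonneg)
  hence "(c - b) * (b - a) * l1 \<le> (c - b) * (b - a) * l2"
    using ab bc by (intro mult_left_mono) auto
  thus ?thesis using z1(4) z2(4) by (simp add: mult.commute mult.left_commute)
qed

lemma compare3:
  fixes v v' v'' u u' u'' :: "real \<Rightarrow> real"
  assumes ab: "a < b" and bc: "b < c" and cv: "continuous_on {a..c} v" and cu: "continuous_on {a..c} u"
    and dv: "\<And>x. a < x \<Longrightarrow> x < c \<Longrightarrow> (v has_real_derivative v' x) (at x)"
    and dv': "\<And>x. a < x \<Longrightarrow> x < c \<Longrightarrow> (v' has_real_derivative v'' x) (at x)"
    and du: "\<And>x. a < x \<Longrightarrow> x < c \<Longrightarrow> (u has_real_derivative u' x) (at x)"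
    and du': "\<And>x. a < x \<Longrightarrow> x < c \<Longrightarrow> (u' has_real_derivative u'' x) (at x)"
    and le: "\<And>x. a < x \<Longrightarrow> x < c \<Longrightarrow> \<bar>v'' x\<bar> \<le> u'' x"
  shows "\<bar>(v c - v b) - (c - b) / (b - a) * (v b - v a)\<bar> \<le> (u c - u b) - (c - b) / (b - a) * (u b - u a)"
proof -
  have le1: "\<And>x. a < x \<Longrightarrow> x < c \<Longrightarrow> 0 \<le> u'' x + v'' x" 
   and le2: "\<And>x. a < x \<Longrightarrow> x < c \<Longrightarrow> 0 \<le> u'' x - v'' x"
    using le by (smt (verit))+
  have p: "(c - b) * ((\<lambda>x. u x + v x) b - (\<lambda>x. u x + v x) a) \<le> (b - a) * ((\<lambda>x. u x + v x) c - (\<lambda>x. u x + v x) b)"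
    apply (rule core3[OF ab bc, where g' = "\<lambda>x. u' x + v' x" and g'' = "\<lambda>x. u'' x + v'' x"])
    using cu cv le1 by (auto intro!: continuous_intros DERIV_add du dv du' dv')
  have m: "(c - b) * ((\<lambda>x. u x - v x) b - (\<lambda>x. u x - v x) a) \<le> (b - a) * ((\<lambda>x. u x - v x) c - (\<lambda>x. u x - v x) b)"
    apply (rule core3[OF ab bc, where g' = "\<lambda>x. u' x - v' x" and g'' = "\<lambda>x. u'' x - v'' x"])
    using cu cv le2 by (auto intro!: continuous_intros DERIV_diff du dv du' dv')
  define r where "r = (c - b) / (b - a)"
  have "(c - b) = r * (b - a)" using ab by (simp add: r_def)
  with p m ab have "r * (u b + v b - (u a + v a)) \<le> u c + v c - (u b + v b)"
      "r * (u b - v b - (u a - v a)) \<le> u c - v c - (u b - v b)"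
    by (simp_all add: mult.assoc mult.left_commute[of r])
  thus ?thesis unfolding r_def[symmetric] by (simp add: abs_le_iff algebra_simps)
qed


lemma grid_mono:
  assumes "is_grid T N t" "i < j" "j \<le> N" shows "t i < t j"
  using assms(2,3)
proof (induction j)
  case 0 then show ?case by simp
next
  case (Suc j)
  have s: "t j < t (Suc j)" using assms(1) Suc.prems unfolding is_grid_def by auto
  show ?case
  proof (cases "i = j")
    case True then show ?thesis using s by simp
  next
    case False then show ?thesis using Suc s by auto
  qed
qed

lemma grid_range:
  assumes g: "is_grid T N t" "i \<le> N" shows "0 \<le> t i" "t i \<le> T"
proof -
  have t0: "t 0 = 0" "t N = T" using g unfolding is_grid_def by auto
  show "0 \<le> t i" using grid_mono[OF g(1), of 0 i] g(2) t0 by (cases "i = 0") auto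
  show "t i \<le> T" using grid_mono[OF g(1), of i N] g(2) t0 by (cases "i = N") auto
qed

lemma Rres_eq:
  assumes "2 \<le> n"
  shows "Rres v t n = (v (t n) - v (t (n-1))) - (t n - t (n-1)) / (t (n-1) - t (n-2)) * (v (t (n-1)) - v (t (n-2)))"
proof -
  have e: "n - 1 - 1 = n - 2" by simp
  have r: "\<And>x y z r::real. x - (1 + r) * y + r * z = (x - y) - r * (y - z)" by algebra
  show ?thesis unfolding Rres_def ratio_def tau_def e r ..
qed

lemma lin_aux: "0 \<le> A \<Longrightarrow> A \<le> B \<Longrightarrow> W \<le> A + X \<Longrightarrow> B \<le> D \<Longrightarrow> 0 \<le> B \<Longrightarrow> 0 \<le> (X::real) \<Longrightarrow> A + W - B \<le> 2 * (D + X)"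
  by smt

lemma part1:
  fixes v v' v'' :: "real \<Rightarrow> real" and T \<iota> C :: real
  assumes T: "0 < T"
    and iota: "0 < \<iota>" "\<iota> < 1"
    and cont: "continuous_on {0..T} v"
    and d1: "\<forall>s\<in>{0<..T}. (v has_real_derivative v' s) (at s within {0<..T})"
    and d2: "\<forall>s\<in>{0<..T}. (v' has_real_derivative v'' s) (at s within {0<..T})"
    and bound: "\<forall>s\<in>{0<..T}. \<bar>v'' s\<bar> \<le> C * (1 + s powr (\<iota> - 2))"
  shows "\<exists>Cv. Cv \<ge> 0 \<and> (\<forall>N t. is_grid T N t \<longrightarrow>
            (2 \<le> N \<longrightarrow> \<bar>Rres v t 2\<bar> \<le>
                Cv * ((tau t 1 + tau t 2) powr \<iota> / \<iota> + t 1 powr (\<iota> - 2) * (tau t 2)\<^sup>2)) \<and>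
            (\<forall>n. 3 \<le> n \<and> n \<le> N \<longrightarrow> \<bar>Rres v t n\<bar> \<le>
                Cv * (t (n - 2) powr (\<iota> - 2) * (tau t (n - 1) + tau t n)\<^sup>2
                      + t (n - 1) powr (\<iota> - 2) * (tau t n)\<^sup>2)))"
proof -
  have C0: "C \<ge> 0"
  proof -
    have "\<bar>v'' T\<bar> \<le> C * (1 + T powr (\<iota> - 2))" using bound T by auto
    moreover have p: "1 + T powr (\<iota> - 2) > 0" using powr_ge_zero[of T "\<iota> - 2"] by linarith
    ultimately have "0 \<le> C * (1 + T powr (\<iota> - 2))" by (meson abs_ge_zero order_trans)
    thus ?thesis using p by (simp add: zero_le_mult_iff)
  qed
  have dv: "(v has_real_derivative v' x) (at x)" if "0 < x" "x < T" for x
  proof -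
    have "at x within {0<..T} = at x" using that by (intro at_within_open_subset[of _ "{0<..<T}"]) auto
    moreover have "(v has_real_derivative v' x) (at x within {0<..T})" using d1 that by auto
    ultimately show ?thesis by simp
  qed
  have dv': "(v' has_real_derivative v'' x) (at x)" if "0 < x" "x < T" for x
  proof -
    have "at x within {0<..T} = at x" using that by (intro at_within_open_subset[of _ "{0<..<T}"]) auto
    moreover have "(v' has_real_derivative v'' x) (at x within {0<..T})" using d2 that by auto
    ultimately show ?thesis by simp
  qed
  define K where "K = C / (\<iota> * (1 - \<iota>))"
  have K0: "K \<ge> 0" unfolding K_def using C0 iota by auto
  define Cv where "Cv = C * (1 + T powr (2 - \<iota>)) + 2 * K"
  have Cv0: "Cv \<ge> 0" unfolding Cv_def using C0 K0 by auto
  have TT: "1 \<le> T powr (2 - \<iota>) * x powr (\<iota> - 2)" if "0 < x" "x \<le> T" for x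
  proof -
    have "x powr (\<iota> - 2) \<ge> T powr (\<iota> - 2)" using that iota by (intro powr_mono2') auto
    hence "T powr (2 - \<iota>) * x powr (\<iota> - 2) \<ge> T powr (2 - \<iota>) * T powr (\<iota> - 2)"
      by (intro mult_left_mono) auto
    also have "T powr (2 - \<iota>) * T powr (\<iota> - 2) = 1" using T by (simp add: powr_add[symmetric])
    finally show ?thesis by simp
  qed
  have case3: "\<bar>Rres v t n\<bar> \<le> Cv * (t (n - 2) powr (\<iota> - 2) * (tau t (n - 1) + tau t n)\<^sup>2
                      + t (n - 1) powr (\<iota> - 2) * (tau t n)\<^sup>2)"
    if g: "is_grid T N t" and n: "3 \<le> n" "n \<le> N" for N t n
  proof -
    define a where "a = t (n - 2)"
    define b where "b = t (n - 1)"
    define c where "c = t n"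
    have ab: "a < b" unfolding a_def b_def using grid_mono[OF g] n by auto
    have bc: "b < c" unfolding b_def c_def using grid_mono[OF g] n by auto
    have a0: "0 < a" unfolding a_def using grid_mono[OF g, of 0 "n-2"] n g by (auto simp: is_grid_def)
    have cT: "c \<le> T" unfolding c_def using grid_range[OF g] n by auto
    define M where "M = C * (1 + a powr (\<iota> - 2))"
    have M0: "M \<ge> 0" using C0 unfolding M_def by (intro mult_nonneg_nonneg add_nonneg_nonneg) auto
    have cmp: "\<bar>(v c - v b) - (c - b) / (b - a) * (v b - v a)\<bar> \<le>
       ((\<lambda>s. M / 2 * s\<^sup>2) c - (\<lambda>s. M / 2 * s\<^sup>2) b) - (c - b) / (b - a) * ((\<lambda>s. M / 2 * s\<^sup>2) b - (\<lambda>s. M / 2 * s\<^sup>2) a)"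
    proof (rule compare3[OF ab bc, where v' = v' and v'' = v'' and u' = "\<lambda>s. M * s" and u'' = "\<lambda>s. M"])
      show "continuous_on {a..c} v" using a0 cT by (intro continuous_on_subset[OF cont]) auto
      show "continuous_on {a..c} (\<lambda>s. M / 2 * s\<^sup>2)" by (intro continuous_intros)
      fix x assume x: "a < x" "x < c"
      show "(v has_real_derivative v' x) (at x)" using x a0 cT by (intro dv) auto
      show "(v' has_real_derivative v'' x) (at x)" using x a0 cT by (intro dv') auto
      show "((\<lambda>s. M / 2 * s\<^sup>2) has_real_derivative M * x) (at x)"
        by (auto intro!: derivative_eq_intros)
      show "((\<lambda>s. M * s) has_real_derivative M) (at x)"
        by (auto intro!: derivative_eq_intros)
      have "\<bar>v'' x\<bar> \<le> C * (1 + x powr (\<iota> - 2))" using bound x a0 cT by auto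
      also have "\<dots> \<le> M" unfolding M_def using C0 x a0 iota
        by (intro mult_left_mono add_left_mono powr_mono2') auto
      finally show "\<bar>v'' x\<bar> \<le> M" .
    qed
    have ueq: "((\<lambda>s. M / 2 * s\<^sup>2) c - (\<lambda>s. M / 2 * s\<^sup>2) b) - (c - b) / (b - a) * ((\<lambda>s. M / 2 * s\<^sup>2) b - (\<lambda>s. M / 2 * s\<^sup>2) a)
        = M / 2 * ((c - b) * (c - a))"
      using ab by (simp add: field_simps power2_eq_square)
    have R: "Rres v t n = (v c - v b) - (c - b) / (b - a) * (v b - v a)"
      using Rres_eq[of n v t] n unfolding a_def b_def c_def by simp
    have tau: "tau t (n - 1) + tau t n = c - a" "tau t n = c - b"
    proof -
      have "n - 1 - 1 = n - 2" by simp
      thus "tau t (n - 1) + tau t n = c - a" "tau t n = c - b" unfolding tau_def a_def b_def c_def by simp_all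
    qed
    have "\<bar>Rres v t n\<bar> \<le> M / 2 * ((c - b) * (c - a))" using cmp ueq R by simp
    also have "\<dots> \<le> M * (c - a)\<^sup>2"
    proof -
      have h: "(c - b) * (c - a) \<le> (c - a) * (c - a)" using ab bc by (intro mult_right_mono) auto
      have X0: "0 \<le> (c - b) * (c - a)" using ab bc by simp
      have "M / 2 * ((c - b) * (c - a)) \<le> M * ((c - b) * (c - a))" using mult_right_mono[of "M/2" M "(c - b) * (c - a)"] M0 X0 by linarith
      also have "\<dots> \<le> M * ((c - a) * (c - a))" using mult_left_mono[OF h M0] .
      finally show ?thesis unfolding power2_eq_square .
    qed
    also have "\<dots> \<le> C * (1 + T powr (2 - \<iota>)) * a powr (\<iota> - 2) * (c - a)\<^sup>2"
    proof -
      have "1 \<le> T powr (2 - \<iota>) * a powr (\<iota> - 2)" using TT[of a] a0 ab bc cT by auto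
      hence "C * 1 \<le> C * (T powr (2 - \<iota>) * a powr (\<iota> - 2))" using C0 by (intro mult_left_mono)
      hence "M \<le> C * (1 + T powr (2 - \<iota>)) * a powr (\<iota> - 2)" unfolding M_def
        by (simp add: algebra_simps)
      thus ?thesis by (intro mult_right_mono) auto
    qed
    also have "\<dots> \<le> Cv * (a powr (\<iota> - 2) * (c - a)\<^sup>2)"
    proof -
      have "C * (1 + T powr (2 - \<iota>)) \<le> Cv" unfolding Cv_def using K0 by simp
      moreover have "0 \<le> a powr (\<iota> - 2) * (c - a)\<^sup>2" by simp
      ultimately show ?thesis using mult_right_mono by (metis mult.assoc)
    qed
    also have "\<dots> \<le> Cv * (a powr (\<iota> - 2) * (c - a)\<^sup>2 + b powr (\<iota> - 2) * (c - b)\<^sup>2)"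
      using Cv0 by (intro mult_left_mono) auto
    finally have X: "\<bar>Rres v t n\<bar> \<le> Cv * (a powr (\<iota> - 2) * (c - a)\<^sup>2 + b powr (\<iota> - 2) * (c - b)\<^sup>2)" .
    show ?thesis unfolding tau(1) unfolding tau(2) unfolding a_def[symmetric] b_def[symmetric] c_def[symmetric] by (rule X)
  qed
  have case2: "\<bar>Rres v t 2\<bar> \<le> Cv * ((tau t 1 + tau t 2) powr \<iota> / \<iota> + t 1 powr (\<iota> - 2) * (tau t 2)\<^sup>2)"
    if g: "is_grid T N t" and n: "2 \<le> N" for N t
  proof -
    define b where "b = t 1"
    define c where "c = t 2"
    have t0: "t 0 = 0" using g by (simp add: is_grid_def)
    have b0: "0 < b" unfolding b_def using grid_mono[OF g, of 0 1] n t0 by auto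
    have bc: "b < c" unfolding b_def c_def using grid_mono[OF g, of 1 2] n by auto
    have cT: "c \<le> T" unfolding c_def using grid_range[OF g] n by auto
    define u where "u = (\<lambda>s::real. C / 2 * s\<^sup>2 - K * s powr \<iota>)"
    have cmp: "\<bar>(v c - v b) - (c - b) / (b - 0) * (v b - v 0)\<bar> \<le>
       (u c - u b) - (c - b) / (b - 0) * (u b - u 0)"
    proof (rule compare3[OF b0 bc, where v' = v' and v'' = v'' and u' = "\<lambda>s. C * s - K * (\<iota> * s powr (\<iota> - 1))"
          and u'' = "\<lambda>s. C + C * s powr (\<iota> - 2)"])
      show "continuous_on {0..c} v" using cT by (intro continuous_on_subset[OF cont]) auto
      show "continuous_on {0..c} u" unfolding u_def using iota
        by (intro continuous_intros continuous_on_powr') auto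
      fix x assume x: "0 < x" "x < c"
      show "(v has_real_derivative v' x) (at x)" using x cT by (intro dv) auto
      show "(v' has_real_derivative v'' x) (at x)" using x cT by (intro dv') auto
      show "(u has_real_derivative C * x - K * (\<iota> * x powr (\<iota> - 1))) (at x)"
        unfolding u_def using x by (auto intro!: derivative_eq_intros)
      have "((\<lambda>s. C * s - K * (\<iota> * s powr (\<iota> - 1))) has_real_derivative C - K * (\<iota> * ((\<iota> - 1) * x powr (\<iota> - 1 - 1)))) (at x)"
        using x by (auto intro!: derivative_eq_intros)
      moreover have "C - K * (\<iota> * ((\<iota> - 1) * x powr (\<iota> - 1 - 1))) = C + C * x powr (\<iota> - 2)"
        unfolding K_def using iota by (simp add: field_simps)
      ultimately show "((\<lambda>s. C * s - K * (\<iota> * s powr (\<iota> - 1))) has_real_derivative C + C * x powr (\<iota> - 2)) (at x)"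
        by (metis (no_types, lifting))
      show "\<bar>v'' x\<bar> \<le> C + C * x powr (\<iota> - 2)" using bound x cT by (auto simp: algebra_simps)
    qed
    have R: "Rres v t 2 = (v c - v b) - (c - b) / (b - 0) * (v b - v 0)"
      using Rres_eq[of 2 v t] t0 unfolding b_def c_def by simp
    have tau: "tau t 1 + tau t 2 = c" "tau t 2 = c - b"
      unfolding tau_def b_def c_def using t0 by simp_all
    have u0: "u 0 = 0" unfolding u_def using iota by simp
    have pb: "(c - b) / b * b powr \<iota> = (c - b) * b powr (\<iota> - 1)"
      using b0 by (simp add: powr_diff)
    have ueq: "(u c - u b) - (c - b) / (b - 0) * (u b - u 0)
        = C / 2 * ((c - b) * c) + K * (b powr \<iota> + (c - b) * b powr (\<iota> - 1) - c powr \<iota>)"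
    proof -
      have h: "(c - b) / b * (C / 2 * b\<^sup>2 - K * b powr \<iota>) = C / 2 * ((c - b) * b) - K * ((c - b) / b * b powr \<iota>)"
        using b0 by (simp add: field_simps power2_eq_square)
      have "(u c - u b) - (c - b) / (b - 0) * (u b - u 0) = (C / 2 * c\<^sup>2 - K * c powr \<iota>) - (C / 2 * b\<^sup>2 - K * b powr \<iota>)
              - (c - b) / b * (C / 2 * b\<^sup>2 - K * b powr \<iota>)"
        unfolding u_def using iota by simp
      also have "\<dots> = (C / 2 * c\<^sup>2 - K * c powr \<iota>) - (C / 2 * b\<^sup>2 - K * b powr \<iota>)
              - (C / 2 * ((c - b) * b) - K * ((c - b) * b powr (\<iota> - 1)))"
        unfolding h pb ..
      also have "\<dots> = C / 2 * ((c - b) * c) + K * (b powr \<iota> + (c - b) * b powr (\<iota> - 1) - c powr \<iota>)"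
        unfolding power2_eq_square by algebra
      finally show ?thesis .
    qed
    define P where "P = c powr \<iota> / \<iota> + b powr (\<iota> - 2) * (c - b)\<^sup>2"
    have ci: "c powr \<iota> \<le> c powr \<iota> / \<iota>"
    proof -
      have "c powr \<iota> * \<iota> \<le> c powr \<iota>" using iota by (intro mult_left_le) auto
      thus ?thesis using iota by (simp add: le_divide_eq)
    qed
    have cP: "c powr \<iota> \<le> P"
    proof -
      note ci
      moreover have "0 \<le> b powr (\<iota> - 2) * (c - b)\<^sup>2" by simp
      ultimately show ?thesis unfolding P_def by linarith
    qed
    have P0: "0 \<le> P" using cP powr_ge_zero[of c \<iota>] by linarith
    have q1: "(c - b) * c \<le> T powr (2 - \<iota>) * c powr \<iota>"
    proof -
      have "(c - b) * c \<le> c * c" using b0 bc by (intro mult_right_mono) auto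
      also have "c * c = c powr (2 - \<iota>) * c powr \<iota>"
      proof -
        have "c powr (2 - \<iota>) * c powr \<iota> = c powr 2" using powr_add[of c "2-\<iota>" \<iota>] by simp
        also have "c powr 2 = c * c" using b0 bc by (simp add: powr_numeral power2_eq_square)
        finally show ?thesis by simp
      qed
      also have "\<dots> \<le> T powr (2 - \<iota>) * c powr \<iota>" using b0 bc cT iota
        by (intro mult_right_mono powr_mono2) auto
      finally show ?thesis .
    qed
    have q2: "b powr \<iota> \<le> c powr \<iota>" using b0 bc iota by (intro powr_mono2) auto
    have q3: "(c - b) * b powr (\<iota> - 1) \<le> b powr \<iota> + b powr (\<iota> - 2) * (c - b)\<^sup>2"
    proof -
      have e1: "b powr (\<iota> - 1) = b powr (\<iota> - 2) * b" using b0 powr_add[of b "\<iota> - 2" 1] by simp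
      have e2: "b powr \<iota> = b powr (\<iota> - 2) * b\<^sup>2"
      proof -
        have "b powr \<iota> = b powr (\<iota> - 2) * b powr 2" using powr_add[of b "\<iota> - 2" 2] by simp
        thus ?thesis using b0 by (simp add: powr_numeral)
      qed
      have "0 \<le> (c - b - b)\<^sup>2" by simp
      moreover have "b * b \<le> b * c" using b0 bc by simp
      ultimately have "(c - b) * b \<le> b\<^sup>2 + (c - b)\<^sup>2" by (simp add: power2_eq_square algebra_simps)
      hence "b powr (\<iota> - 2) * ((c - b) * b) \<le> b powr (\<iota> - 2) * (b\<^sup>2 + (c - b)\<^sup>2)"
        by (intro mult_left_mono) auto
      thus ?thesis unfolding e1 e2 by (simp add: algebra_simps)
    qed
    have "\<bar>Rres v t 2\<bar> \<le> C / 2 * ((c - b) * c) + K * (b powr \<iota> + (c - b) * b powr (\<iota> - 1) - c powr \<iota>)"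
      using cmp R ueq by simp
    also have "\<dots> \<le> C * (T powr (2 - \<iota>) * P) + K * (2 * P)"
    proof -
      have "C / 2 * ((c - b) * c) \<le> C * (T powr (2 - \<iota>) * P)"
      proof -
        have "T powr (2 - \<iota>) * c powr \<iota> \<le> T powr (2 - \<iota>) * P" using cP by (intro mult_left_mono) auto
        hence h: "(c - b) * c \<le> T powr (2 - \<iota>) * P" using q1 by linarith
        have X0: "(c - b) * c \<ge> 0" using b0 bc by auto
        have "C / 2 * ((c - b) * c) \<le> C * ((c - b) * c)" using mult_right_mono[of "C/2" C "(c - b) * c"] C0 X0 by linarith
        also have "\<dots> \<le> C * (T powr (2 - \<iota>) * P)" using mult_left_mono[OF h C0] .
        finally show ?thesis .
      qed
      moreover have "K * (b powr \<iota> + (c - b) * b powr (\<iota> - 1) - c powr \<iota>) \<le> K * (2 * P)"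
      proof -
        have XX: "0 \<le> b powr (\<iota> - 2) * (c - b)\<^sup>2" by simp
        have "b powr \<iota> + (c - b) * b powr (\<iota> - 1) - c powr \<iota> \<le> 2 * P"
          unfolding P_def by (rule lin_aux[OF _ q2 q3 ci _ XX]) simp_all
        thus ?thesis using K0 by (intro mult_left_mono) auto
      qed
      ultimately show ?thesis by linarith
    qed
    also have "\<dots> \<le> Cv * P"
    proof -
      have "C * (T powr (2 - \<iota>) * P) \<le> C * (1 + T powr (2 - \<iota>)) * P" using C0 P0
        by (simp add: algebra_simps)
      thus ?thesis unfolding Cv_def by (simp add: algebra_simps)
    qed
    finally have X: "\<bar>Rres v t 2\<bar> \<le> Cv * (c powr \<iota> / \<iota> + b powr (\<iota> - 2) * (c - b)\<^sup>2)" unfolding P_def .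
    show ?thesis unfolding tau(1) unfolding tau(2) b_def[symmetric] by (rule X)
  qed
  show ?thesis using case2 case3 Cv0 by blast
qed


lemma graded_grid:
  assumes T: "0 < T" and g: "0 < \<gamma>" and N: "1 \<le> N"
  shows "is_grid T N (graded T \<gamma> N)"
  unfolding is_grid_def graded_def
proof (intro conjI allI impI)
  show "T * (real 0 / real N) powr \<gamma> = 0" by simp
  show "T * (real N / real N) powr \<gamma> = T" using N by simp
  fix k assume k: "k < N"
  have "(real k / real N) powr \<gamma> < (real (Suc k) / real N) powr \<gamma>"
    using N g by (intro powr_less_mono2) (auto simp: divide_strict_right_mono)
  thus "T * (real k / real N) powr \<gamma> < T * (real (Suc k) / real N) powr \<gamma>"
    using T by simp
qed

lemma powr_diff_le:
  fixes x y \<gamma> :: real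
  assumes g: "1 \<le> \<gamma>" and x: "0 < x" and xy: "x < y"
  shows "y powr \<gamma> - x powr \<gamma> \<le> \<gamma> * y powr (\<gamma> - 1) * (y - x)"
proof -
  have d: "((\<lambda>t. t powr \<gamma>) has_real_derivative \<gamma> * t powr (\<gamma> - 1)) (at t)" if "x \<le> t" for t
    using that x by (auto intro!: derivative_eq_intros)
  obtain z where z: "x < z" "z < y" "y powr \<gamma> - x powr \<gamma> = (y - x) * (\<gamma> * z powr (\<gamma> - 1))"
    using MVT2[OF xy, of "\<lambda>t. t powr \<gamma>" "\<lambda>t. \<gamma> * t powr (\<gamma> - 1)"] d by blast
  have "z powr (\<gamma> - 1) \<le> y powr (\<gamma> - 1)" using z x g by (intro powr_mono2) auto
  hence "(y - x) * (\<gamma> * z powr (\<gamma> - 1)) \<le> (y - x) * (\<gamma> * y powr (\<gamma> - 1))"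
    using xy g by (intro mult_left_mono) auto
  thus ?thesis using z by (simp add: algebra_simps)
qed


lemma one_div_powr: "0 < h \<Longrightarrow> (1 / h) powr p = h powr (- p)" for h p :: real
  by (simp add: powr_divide powr_minus_divide)

lemma part2:
  fixes v :: "real \<Rightarrow> real" and T \<iota> Cv \<gamma> :: real
  assumes T: "0 < T" and iota: "0 < \<iota>" "\<iota> < 1" and Cv0: "0 \<le> Cv" and gam: "1 \<le> \<gamma>"
    and H2: "\<And>N t. is_grid T N t \<Longrightarrow> 2 \<le> N \<Longrightarrow> \<bar>Rres v t 2\<bar> \<le>
                Cv * ((tau t 1 + tau t 2) powr \<iota> / \<iota> + t 1 powr (\<iota> - 2) * (tau t 2)\<^sup>2)"
    and H3: "\<And>N t n. is_grid T N t \<Longrightarrow> 3 \<le> n \<Longrightarrow> n \<le> N \<Longrightarrow> \<bar>Rres v t n\<bar> \<le>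
                Cv * (t (n - 2) powr (\<iota> - 2) * (tau t (n - 1) + tau t n)\<^sup>2
                      + t (n - 1) powr (\<iota> - 2) * (tau t n)\<^sup>2)"
  shows "\<exists>Cg. \<forall>N::nat. \<forall>n. 2 \<le> n \<and> n \<le> N \<longrightarrow>
            \<bar>Rres v (graded T \<gamma> N) n\<bar> \<le> Cg * real N powr (- min 2 (\<gamma> * \<iota>))"
proof -
  define K1 where "K1 = Cv * (T powr \<iota> * (2 powr (\<gamma> * \<iota>) / \<iota> + (2 powr \<gamma>)\<^sup>2))"
  define D where "D = 2 * \<gamma> * 3 powr (\<gamma> - 1)"
  define K2 where "K2 = 2 * Cv * (T powr \<iota> * D\<^sup>2)"
  have K10: "0 \<le> K1" unfolding K1_def using Cv0 iota by (intro mult_nonneg_nonneg add_nonneg_nonneg) auto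
  have K20: "0 \<le> K2" unfolding K2_def using Cv0 by simp
  have gpos: "0 < \<gamma>" using gam by simp
  show ?thesis
  proof (rule exI[of _ "K1 + K2"], intro allI impI)
    fix N n :: nat assume n: "2 \<le> n \<and> n \<le> N"
    define h where "h = real N"
    have h2: "2 \<le> h" unfolding h_def using n by simp
    have h0: "0 < h" using h2 by simp
    define t where "t = graded T \<gamma> N"
    have g: "is_grid T N t" unfolding t_def using n T gpos by (intro graded_grid) auto
    have tk: "t k = T * (real k / h) powr \<gamma>" for k unfolding t_def graded_def h_def by simp
    define E where "E = h powr (- min 2 (\<gamma> * \<iota>))"
    have E0: "0 \<le> E" unfolding E_def by simp
    have R: "\<bar>Rres v t n\<bar> \<le> K1 * E \<or> \<bar>Rres v t n\<bar> \<le> K2 * E"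
    proof (cases "n = 2")
      case True
      define s where "s = t 1"
      have s_eq: "s = T * (1 / h) powr \<gamma>" unfolding s_def tk by simp
      have s0: "0 < s" unfolding s_eq using T h0 by simp
      have t2: "t 2 = 2 powr \<gamma> * s"
      proof -
        have "real 2 / h = 2 * (1 / h)" by simp
        thus ?thesis unfolding tk s_eq by (simp only: powr_mult) simp
      qed
      have t0: "t 0 = 0" unfolding tk by simp
      have ts: "s < t 2" unfolding s_def using grid_mono[OF g, of 1 2] n by simp
      have tau: "tau t 1 + tau t 2 = t 2" "tau t 2 = t 2 - s"
        unfolding tau_def s_def using t0 by simp_all
      have "\<bar>Rres v t n\<bar> \<le> Cv * ((t 2) powr \<iota> / \<iota> + s powr (\<iota> - 2) * (t 2 - s)\<^sup>2)"
        using H2[OF g] n True unfolding tau(1) unfolding tau(2) s_def by simp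
      also have "\<dots> \<le> Cv * (s powr \<iota> * (2 powr (\<gamma> * \<iota>) / \<iota> + (2 powr \<gamma>)\<^sup>2))"
      proof -
        have a1: "(t 2) powr \<iota> = 2 powr (\<gamma> * \<iota>) * s powr \<iota>"
          unfolding t2 by (simp add: powr_mult powr_powr)
        have "(t 2 - s)\<^sup>2 \<le> (t 2)\<^sup>2" using ts s0 by (intro power_mono) auto
        hence "s powr (\<iota> - 2) * (t 2 - s)\<^sup>2 \<le> s powr (\<iota> - 2) * (t 2)\<^sup>2"
          by (intro mult_left_mono) auto
        also have "s powr (\<iota> - 2) * (t 2)\<^sup>2 = (2 powr \<gamma>)\<^sup>2 * (s powr (\<iota> - 2) * s\<^sup>2)"
          unfolding t2 by (simp add: power_mult_distrib)
        also have "s powr (\<iota> - 2) * s\<^sup>2 = s powr \<iota>"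
        proof -
          have "s powr \<iota> = s powr (\<iota> - 2) * s powr 2" using powr_add[of s "\<iota> - 2" 2] by simp
          thus ?thesis using s0 by (simp add: powr_numeral)
        qed
        finally have "s powr (\<iota> - 2) * (t 2 - s)\<^sup>2 \<le> (2 powr \<gamma>)\<^sup>2 * s powr \<iota>" .
        hence "(t 2) powr \<iota> / \<iota> + s powr (\<iota> - 2) * (t 2 - s)\<^sup>2 \<le> s powr \<iota> * (2 powr (\<gamma> * \<iota>) / \<iota> + (2 powr \<gamma>)\<^sup>2)"
          unfolding a1 by (simp add: algebra_simps)
        thus ?thesis using Cv0 by (intro mult_left_mono) auto
      qed
      also have "\<dots> \<le> K1 * E"
      proof -
        have "s powr \<iota> = T powr \<iota> * h powr (- (\<gamma> * \<iota>))"
          unfolding s_eq using h0 by (simp add: powr_mult powr_powr one_div_powr)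
        also have "\<dots> \<le> T powr \<iota> * E" unfolding E_def using h2 
          by (intro mult_left_mono powr_mono) auto
        finally have "s powr \<iota> \<le> T powr \<iota> * E" .
        hence "s powr \<iota> * (2 powr (\<gamma> * \<iota>) / \<iota> + (2 powr \<gamma>)\<^sup>2) \<le> T powr \<iota> * E * (2 powr (\<gamma> * \<iota>) / \<iota> + (2 powr \<gamma>)\<^sup>2)"
          using iota by (intro mult_right_mono add_nonneg_nonneg) auto
        hence "Cv * (s powr \<iota> * (2 powr (\<gamma> * \<iota>) / \<iota> + (2 powr \<gamma>)\<^sup>2)) \<le> Cv * (T powr \<iota> * E * (2 powr (\<gamma> * \<iota>) / \<iota> + (2 powr \<gamma>)\<^sup>2))"
          using Cv0 by (intro mult_left_mono)
        thus ?thesis unfolding K1_def by (simp add: algebra_simps)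
      qed
      finally show ?thesis by simp
    next
      case False
      with n have n3: "3 \<le> n" by simp
      define m where "m = n - 2"
      have m1: "1 \<le> m" using n3 unfolding m_def by simp
      define x where "x = real m / h"
      define y where "y = real n / h"
      define a where "a = t (n - 2)"
      define b where "b = t (n - 1)"
      define c where "c = t n"
      have x0: "0 < x" unfolding x_def using m1 h0 by simp
      have x1: "x \<le> 1" unfolding x_def h_def m_def using n by simp
      have xh: "1 / h \<le> x" unfolding x_def using m1 h0 by (simp add: divide_right_mono)
      have xy: "x < y" unfolding x_def y_def m_def using h0 n3 by (simp add: divide_strict_right_mono)
      have yx: "y - x = 2 / h" unfolding x_def y_def m_def using n3 by (simp add: diff_divide_distrib[symmetric] of_nat_diff)
      have y3: "y \<le> 3 * x" unfolding x_def y_def m_def using n3 h0 by (simp add: divide_right_mono)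
      have a_eq: "a = T * x powr \<gamma>" unfolding a_def tk x_def m_def ..
      have c_eq: "c = T * y powr \<gamma>" unfolding c_def tk y_def ..
      have a0: "0 < a" unfolding a_eq using T x0 by simp
      have ab: "a < b" unfolding a_def b_def using grid_mono[OF g] n n3 by simp
      have bc: "b < c" unfolding b_def c_def using grid_mono[OF g] n n3 by simp
      have tau: "tau t (n - 1) + tau t n = c - a" "tau t n = c - b"
      proof -
        have "n - 1 - 1 = n - 2" by simp
        thus "tau t (n - 1) + tau t n = c - a" "tau t n = c - b" unfolding tau_def a_def b_def c_def by simp_all
      qed
      have "\<bar>Rres v t n\<bar> \<le> Cv * (a powr (\<iota> - 2) * (c - a)\<^sup>2 + b powr (\<iota> - 2) * (c - b)\<^sup>2)"
        using H3[OF g n3] n unfolding tau(1) unfolding tau(2) a_def b_def c_def by simp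
      also have "\<dots> \<le> Cv * (2 * (a powr (\<iota> - 2) * (c - a)\<^sup>2))"
      proof -
        have "b powr (\<iota> - 2) \<le> a powr (\<iota> - 2)" using a0 ab iota by (intro powr_mono2') auto
        moreover have "(c - b)\<^sup>2 \<le> (c - a)\<^sup>2" using ab bc by (intro power_mono) auto
        ultimately have "b powr (\<iota> - 2) * (c - b)\<^sup>2 \<le> a powr (\<iota> - 2) * (c - a)\<^sup>2"
          by (intro mult_mono) auto
        hence "a powr (\<iota> - 2) * (c - a)\<^sup>2 + b powr (\<iota> - 2) * (c - b)\<^sup>2 \<le> 2 * (a powr (\<iota> - 2) * (c - a)\<^sup>2)"
          by linarith
        thus ?thesis using Cv0 by (rule mult_left_mono)
      qed
      also have "\<dots> \<le> Cv * (2 * (T powr \<iota> * D\<^sup>2 * (x powr (\<gamma> * \<iota> - 2) / h\<^sup>2)))"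
      proof -
        have ca: "c - a \<le> T * D * x powr (\<gamma> - 1) / h"
        proof -
          have "c - a = T * (y powr \<gamma> - x powr \<gamma>)" unfolding a_eq c_eq by (simp add: algebra_simps)
          also have "\<dots> \<le> T * (\<gamma> * y powr (\<gamma> - 1) * (y - x))"
            using T by (intro mult_left_mono powr_diff_le[OF gam x0 xy]) auto
          also have "\<dots> \<le> T * (\<gamma> * (3 powr (\<gamma> - 1) * x powr (\<gamma> - 1)) * (y - x))"
          proof -
            have "y powr (\<gamma> - 1) \<le> (3 * x) powr (\<gamma> - 1)" using y3 x0 xy gam by (intro powr_mono2) auto
            also have "\<dots> = 3 powr (\<gamma> - 1) * x powr (\<gamma> - 1)" by (simp add: powr_mult)
            finally show ?thesis using T gam xy by (intro mult_left_mono mult_right_mono) auto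
          qed
          also have "\<dots> = T * D * x powr (\<gamma> - 1) / h" unfolding yx D_def by simp
          finally show ?thesis .
        qed
        have "(c - a)\<^sup>2 \<le> (T * D * x powr (\<gamma> - 1) / h)\<^sup>2" using ca ab bc by (intro power_mono) auto
        hence "a powr (\<iota> - 2) * (c - a)\<^sup>2 \<le> a powr (\<iota> - 2) * (T * D * x powr (\<gamma> - 1) / h)\<^sup>2"
          by (intro mult_left_mono) auto
        also have "a powr (\<iota> - 2) * (T * D * x powr (\<gamma> - 1) / h)\<^sup>2
            = (T powr (\<iota> - 2) * T\<^sup>2) * D\<^sup>2 * ((x powr (\<gamma> * (\<iota> - 2)) * (x powr (\<gamma> - 1))\<^sup>2) / h\<^sup>2)"
          unfolding a_eq by (simp add: powr_mult powr_powr power_mult_distrib power_divide mult.commute mult.left_commute)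
        also have "T powr (\<iota> - 2) * T\<^sup>2 = T powr \<iota>"
        proof -
          have "T powr \<iota> = T powr (\<iota> - 2) * T powr 2" using powr_add[of T "\<iota> - 2" 2] by simp
          thus ?thesis using T by (simp add: powr_numeral)
        qed
        also have "x powr (\<gamma> * (\<iota> - 2)) * (x powr (\<gamma> - 1))\<^sup>2 = x powr (\<gamma> * \<iota> - 2)"
        proof -
          have "(x powr (\<gamma> - 1))\<^sup>2 = x powr (2 * (\<gamma> - 1))"
            using powr_add[of x "\<gamma> - 1" "\<gamma> - 1"] by (simp add: power2_eq_square)
          hence "x powr (\<gamma> * (\<iota> - 2)) * (x powr (\<gamma> - 1))\<^sup>2 = x powr (\<gamma> * (\<iota> - 2)) * x powr (2 * (\<gamma> - 1))"
            by (rule arg_cong)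
          also have "\<dots> = x powr (\<gamma> * (\<iota> - 2) + 2 * (\<gamma> - 1))"
            by (rule powr_add[symmetric])
          also have "\<gamma> * (\<iota> - 2) + 2 * (\<gamma> - 1) = \<gamma> * \<iota> - 2" by (simp add: algebra_simps)
          finally show ?thesis .
        qed
        finally have "a powr (\<iota> - 2) * (c - a)\<^sup>2 \<le> T powr \<iota> * D\<^sup>2 * (x powr (\<gamma> * \<iota> - 2) / h\<^sup>2)" .
        thus ?thesis using Cv0 by (intro mult_left_mono) auto
      qed
      also have "\<dots> \<le> K2 * E"
      proof -
        have xE: "x powr (\<gamma> * \<iota> - 2) / h\<^sup>2 \<le> E"
        proof (cases "\<gamma> * \<iota> \<le> 2")
          case True
          have "x powr (\<gamma> * \<iota> - 2) \<le> (1 / h) powr (\<gamma> * \<iota> - 2)"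
            using True xh h0 by (intro powr_mono2') auto
          also have "\<dots> = h powr (2 - \<gamma> * \<iota>)" using h0 by (simp add: one_div_powr)
          finally have "x powr (\<gamma> * \<iota> - 2) / h\<^sup>2 \<le> h powr (2 - \<gamma> * \<iota>) / h\<^sup>2"
            using h0 by (intro divide_right_mono) auto
          also have "h powr (2 - \<gamma> * \<iota>) / h\<^sup>2 = h powr (- (\<gamma> * \<iota>))"
          proof -
            have "h powr (2 - \<gamma> * \<iota>) = h powr (- (\<gamma> * \<iota>)) * h powr 2" using powr_add[of h "- (\<gamma> * \<iota>)" 2] by simp
            thus ?thesis using h0 by (simp add: powr_numeral)
          qed
          also have "\<dots> = E" unfolding E_def using True by simp
          finally show ?thesis .
        next
          case False
          have "x powr (\<gamma> * \<iota> - 2) \<le> 1 powr (\<gamma> * \<iota> - 2)"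
            using False x0 x1 by (intro powr_mono2) auto
          hence "x powr (\<gamma> * \<iota> - 2) / h\<^sup>2 \<le> 1 / h\<^sup>2" using h0 by (intro divide_right_mono) auto
          also have "1 / h\<^sup>2 = E" unfolding E_def using False h0 by (simp add: powr_neg_numeral)
          finally show ?thesis .
        qed
        have "0 \<le> Cv * (2 * (T powr \<iota> * D\<^sup>2))" using Cv0 by simp
        from mult_left_mono[OF xE this] show ?thesis unfolding K2_def by (simp add: algebra_simps)
      qed
      finally show ?thesis by simp
    qed
    have "K1 * E \<le> (K1 + K2) * E" "K2 * E \<le> (K1 + K2) * E" using K10 K20 E0
      by (simp_all add: algebra_simps)
    hence "\<bar>Rres v t n\<bar> \<le> (K1 + K2) * E" using R by linarith
    thus "\<bar>Rres v (graded T \<gamma> N) n\<bar> \<le> (K1 + K2) * real N powr (- min 2 (\<gamma> * \<iota>))"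
      unfolding t_def E_def h_def .
  qed
qed


theorem mainTheorem2:
  fixes v v' v'' :: "real \<Rightarrow> real" and T \<iota> C :: real
  assumes T: "0 < T"
    and iota: "0 < \<iota>" "\<iota> < 1"
    and cont: "continuous_on {0..T} v"
    and d1: "\<forall>s\<in>{0<..T}. (v has_real_derivative v' s) (at s within {0<..T})"
    and d2: "\<forall>s\<in>{0<..T}. (v' has_real_derivative v'' s) (at s within {0<..T})"
    and cont2: "continuous_on {0<..T} v''"
    and bound: "\<forall>s\<in>{0<..T}. \<bar>v'' s\<bar> \<le> C * (1 + s powr (\<iota> - 2))"
  shows "(\<exists>Cv. \<forall>N t. is_grid T N t \<longrightarrow>
            (2 \<le> N \<longrightarrow> \<bar>Rres v t 2\<bar> \<le>
                Cv * ((tau t 1 + tau t 2) powr \<iota> / \<iota> + t 1 powr (\<iota> - 2) * (tau t 2)\<^sup>2)) \<and>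
            (\<forall>n. 3 \<le> n \<and> n \<le> N \<longrightarrow> \<bar>Rres v t n\<bar> \<le>
                Cv * (t (n - 2) powr (\<iota> - 2) * (tau t (n - 1) + tau t n)\<^sup>2
                      + t (n - 1) powr (\<iota> - 2) * (tau t n)\<^sup>2)))
       \<and> (\<forall>\<gamma>::real. 1 \<le> \<gamma> \<longrightarrow> (\<exists>Cg. \<forall>N::nat. \<forall>n. 2 \<le> n \<and> n \<le> N \<longrightarrow>
            \<bar>Rres v (graded T \<gamma> N) n\<bar> \<le> Cg * real N powr (- min 2 (\<gamma> * \<iota>))))"
proof -
  obtain Cv where Cv0: "Cv \<ge> 0" and HC: "\<forall>N t. is_grid T N t \<longrightarrow>
            (2 \<le> N \<longrightarrow> \<bar>Rres v t 2\<bar> \<le>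
                Cv * ((tau t 1 + tau t 2) powr \<iota> / \<iota> + t 1 powr (\<iota> - 2) * (tau t 2)\<^sup>2)) \<and>
            (\<forall>n. 3 \<le> n \<and> n \<le> N \<longrightarrow> \<bar>Rres v t n\<bar> \<le>
                Cv * (t (n - 2) powr (\<iota> - 2) * (tau t (n - 1) + tau t n)\<^sup>2
                      + t (n - 1) powr (\<iota> - 2) * (tau t n)\<^sup>2))"
    using part1[OF T iota cont d1 d2 bound] by blast
  have "\<forall>\<gamma>::real. 1 \<le> \<gamma> \<longrightarrow> (\<exists>Cg. \<forall>N::nat. \<forall>n. 2 \<le> n \<and> n \<le> N \<longrightarrow>
            \<bar>Rres v (graded T \<gamma> N) n\<bar> \<le> Cg * real N powr (- min 2 (\<gamma> * \<iota>)))"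
  proof (intro allI impI)
    fix \<gamma> :: real assume gam: "1 \<le> \<gamma>"
    show "\<exists>Cg. \<forall>N::nat. \<forall>n. 2 \<le> n \<and> n \<le> N \<longrightarrow>
            \<bar>Rres v (graded T \<gamma> N) n\<bar> \<le> Cg * real N powr (- min 2 (\<gamma> * \<iota>))"
      by (rule part2[OF T iota Cv0 gam]) (use HC in blast)+
  qed
  thus ?thesis using HC by blast
qed

end
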